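(* Let $X$, $Y$, $W$ be metric spaces, $f:X\times Y\to W$ continuous and $w\in W$. Suppose $X$ is simply connected, $\mathcal P$-connected and locally $\mathcal P$-contractible for some family $\mathcal P$ of paths in $X$. Suppose that the projection $\pi:Z_w\to X$ is a local homeomorphism having the continuation property for every path in $\mathcal P$. Then $\pi:Z_w\to X$ is a covering projection and, for every connected component $C_w$ of $Z_w$, the restriction $\pi|_{C_w}:C_w\to X$ is a homeomorphism.
   Context: $Z_w=\{(x,y)\in X\times Y: f(x,y)=w\}$ with the metric inherited from $X\times Y$, and $\pi(x,y)=x$. A family $\mathcal P$ of continuous paths $p:[0,1]\to X$ is given. $X$ is $\mathcal P$-connected if the reverse $\bar p(t)=p(1-t)$ of every $p\in\mathcal P$ lies in $\mathcal P$ and any two points of $X$ are joined by a path in $\mathcal P$. $X$ is locally $\mathcal P$-contractible if every $x_0\in X$ has an open neighborhood $U$ with a continuous homotopy $H:U\times[0,1]\to U$ with $H(x_0,t)=x_0$, $H(x,0)=x_0$, $H(x,1)=x$, and each path $t\mapsto H(x,t)$ in $\mathcal P$. A continuous $g:Z\to X$ has the continuation property for $p:[0,1]\to X$ if for every $b\in(0,1]$ and continuous $q:[0,b)\to Z$ with $g\circ q=p$ on $[0,b)$ there is $t_n\to b$ in $[0,b)$ with $(q(t_n))$ convergent in $Z$. *)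

theory Defs
  imports "HOL-Analysis.Analysis"
begin

text \<open>A path g (a function on [0,1]) belongs to the family P, where members of P are
  compared on [0,1] only (HOL functions are total).\<close>
definition in_paths :: "(real \<Rightarrow> 'a) set \<Rightarrow> (real \<Rightarrow> 'a) \<Rightarrow> bool" where
  "in_paths P g \<longleftrightarrow> (\<exists>p\<in>P. \<forall>t\<in>{0..1}. p t = g t)"

definition P_connected :: "(real \<Rightarrow> 'a::topological_space) set \<Rightarrow> bool" where
  "P_connected P \<longleftrightarrow>
     (\<forall>p\<in>P. in_paths P (reversepath p)) \<and>
     (\<forall>a b. \<exists>p\<in>P. pathstart p = a \<and> pathfinish p = b)"

definition locally_P_contractible :: "(real \<Rightarrow> 'a::topological_space) set \<Rightarrow> bool" where
  "locally_P_contractible P \<longleftrightarrow>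
     (\<forall>x0. \<exists>U. open U \<and> x0 \<in> U \<and>
        (\<exists>H. continuous_on (U \<times> {0..1}) H \<and> H ` (U \<times> {0..1}) \<subseteq> U \<and>
             (\<forall>t\<in>{0..1}. H (x0, t) = x0) \<and>
             (\<forall>x\<in>U. H (x, 0) = x0 \<and> H (x, 1) = x) \<and>
             (\<forall>x\<in>U. in_paths P (\<lambda>t. H (x, t)))))"

definition local_homeomorphism :: "'a::topological_space set \<Rightarrow> ('a \<Rightarrow> 'b::topological_space) \<Rightarrow> 'b set \<Rightarrow> bool" where
  "local_homeomorphism Z g S \<longleftrightarrow> g ` Z \<subseteq> S \<and>
     (\<forall>z\<in>Z. \<exists>U. z \<in> U \<and> openin (top_of_set Z) U \<and> openin (top_of_set S) (g ` U) \<and>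
                (\<exists>h. homeomorphism U (g ` U) g h))"

definition continuation_property :: "'a::metric_space set \<Rightarrow> ('a \<Rightarrow> 'b) \<Rightarrow> (real \<Rightarrow> 'b) \<Rightarrow> bool" where
  "continuation_property Z g p \<longleftrightarrow>
     (\<forall>b\<in>{0<..1}. \<forall>q. continuous_on {0..<b} q \<and> q ` {0..<b} \<subseteq> Z \<and>
                       (\<forall>t\<in>{0..<b}. g (q t) = p t) \<longrightarrow>
        (\<exists>tn. (\<forall>n. tn n \<in> {0..<b}) \<and> tn \<longlonglongrightarrow> b \<and> (\<exists>z\<in>Z. (q \<circ> tn) \<longlonglongrightarrow> z)))"

end

theory Submission
  imports Defs
begin

lemma metric_embedding:
  "\<exists>e::'a::metric_space \<Rightarrow> ('a \<Rightarrow>\<^sub>C real). \<forall>x y. dist (e x) (e y) = dist x y"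
proof -
  fix a :: 'a
  define F where "F x = (\<lambda>y. dist x y - dist a y)" for x
  have inb: "F x \<in> bcontfun" for x
  proof (rule bcontfun_normI)
    show "continuous_on UNIV (F x)" unfolding F_def by (intro continuous_intros)
    show "norm (F x y) \<le> dist x a" for y
      unfolding F_def using dist_triangle2[of x y a] dist_triangle2[of a y x] by (auto simp: dist_commute)
  qed
  define e where "e x = Bcontfun (F x)" for x
  have ap: "apply_bcontfun (e x) = F x" for x
    unfolding e_def using inb by (simp add: Bcontfun_inverse)
  have "dist (e x) (e y) = dist x y" for x y
  proof (rule antisym)
    show "dist (e x) (e y) \<le> dist x y"
      by (rule dist_bound) (simp add: ap F_def dist_real_def,
          metis abs_dist_diff_le dist_commute)
    have "dist (apply_bcontfun (e x) y) (apply_bcontfun (e y) y) \<le> dist (e x) (e y)"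
      by (rule dist_bounded)
    then show "dist x y \<le> dist (e x) (e y)" by (simp add: ap F_def dist_real_def)
  qed
  then show ?thesis by blast
qed

lemma isometry_homeomorphism:
  assumes "\<forall>x y. dist (e x) (e y) = dist x y"
  shows "homeomorphism S (e ` S) e (inv_into S e)"
proof -
  have inj: "inj e" using assms by (metis dist_eq_0_iff injI)
  have ce: "continuous_on T e" for T
    by (auto simp: continuous_on_iff assms intro!: exI)
  have ci: "continuous_on (e ` S) (inv_into S e)"
  proof -
    have "dist (inv_into S e y') (inv_into S e y) = dist y' y" if "y \<in> e ` S" "y' \<in> e ` S" for y y'
      using assms that by (metis f_inv_into_f)
    then show ?thesis by (auto simp: continuous_on_iff intro!: exI)
  qed
  show ?thesis
    using inj ce ci by (simp add: homeomorphism_def inv_into_f_f inj_on_subset image_inv_into_cancel)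
qed

lemma covering_space_homeo:
  assumes cov: "covering_space c p S" and hc: "homeomorphism c c' \<phi> \<phi>'"
    and hs: "homeomorphism S S' \<psi> \<psi>'"
  shows "covering_space c' (\<psi> \<circ> p \<circ> \<phi>') S'"
proof
  have pc: "continuous_on c p" "p ` c = S" using cov by (auto simp: covering_space_def)
  have hc': "continuous_on c' \<phi>'" "\<phi>' ` c' = c" "continuous_on S \<psi>" "\<psi> ` S = S'"
    using hc hs by (auto simp: homeomorphism_def)
  show "continuous_on c' (\<psi> \<circ> p \<circ> \<phi>')"
    by (intro continuous_on_compose) (use pc hc' in auto)
  show "(\<psi> \<circ> p \<circ> \<phi>') ` c' = S'"
    using pc hc' by (metis image_comp)
  fix x' assume "x' \<in> S'"
  then have x: "\<psi>' x' \<in> S" "\<psi> (\<psi>' x') = x'" using hs by (auto simp: homeomorphism_def)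
  then obtain T v where T: "\<psi>' x' \<in> T" "openin (top_of_set S) T"
    and v: "\<Union>v = c \<inter> p -` T" "\<forall>u \<in> v. openin (top_of_set c) u" "pairwise disjnt v"
           "\<forall>u \<in> v. \<exists>q. homeomorphism u T p q"
    using cov unfolding covering_space_def by metis
  have TS: "T \<subseteq> S" using T openin_imp_subset by blast
  show "\<exists>T'. x' \<in> T' \<and> openin (top_of_set S') T' \<and>
           (\<exists>v'. \<Union>v' = c' \<inter> (\<psi> \<circ> p \<circ> \<phi>') -` T' \<and> (\<forall>u \<in> v'. openin (top_of_set c') u) \<and>
             pairwise disjnt v' \<and> (\<forall>u \<in> v'. \<exists>q. homeomorphism u T' (\<psi> \<circ> p \<circ> \<phi>') q))"
  proof (intro exI conjI)
    show "x' \<in> \<psi> ` T" using T x by (metis imageI)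
    show "openin (top_of_set S') (\<psi> ` T)" using homeomorphism_imp_open_map[OF hs T(2)] .
    show "\<Union>((`) \<phi> ` v) = c' \<inter> (\<psi> \<circ> p \<circ> \<phi>') -` (\<psi> ` T)"
    proof -
      have "\<Union>((`) \<phi> ` v) = \<phi> ` (c \<inter> p -` T)" using v(1) by blast
      also have "\<dots> = c' \<inter> (\<psi> \<circ> p \<circ> \<phi>') -` (\<psi> ` T)"
      proof safe
        fix y assume "y \<in> c" "p y \<in> T"
        then show "\<phi> y \<in> c'" "\<phi> y \<in> (\<psi> \<circ> p \<circ> \<phi>') -` (\<psi> ` T)"
          using hc by (auto simp: homeomorphism_def)
      next
        fix y t assume y: "y \<in> c'" "(\<psi> \<circ> p \<circ> \<phi>') y = \<psi> t" "t \<in> T"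
        have "\<phi>' y \<in> c" "\<phi> (\<phi>' y) = y" using hc y(1) by (auto simp: homeomorphism_def)
        moreover have "p (\<phi>' y) \<in> S" using pc \<open>\<phi>' y \<in> c\<close> by blast
        moreover have "p (\<phi>' y) = t"
          using y hs TS \<open>p (\<phi>' y) \<in> S\<close> unfolding homeomorphism_def by (metis comp_apply subsetD)
        ultimately show "y \<in> \<phi> ` (c \<inter> p -` T)" using y by (metis IntI image_eqI vimageI)
      qed
      finally show ?thesis .
    qed
    show "\<forall>u \<in> (`) \<phi> ` v. openin (top_of_set c') u"
      using v(2) homeomorphism_imp_open_map[OF hc] by blast
    show "pairwise disjnt ((`) \<phi> ` v)"
    proof (rule pairwiseI)
      fix a b assume ab: "a \<in> (`) \<phi> ` v" "b \<in> (`) \<phi> ` v" "a \<noteq> b"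
      then obtain u1 u2 where u: "u1 \<in> v" "u2 \<in> v" "a = \<phi> ` u1" "b = \<phi> ` u2" by blast
      then have "u1 \<noteq> u2" using ab by blast
      then have "disjnt u1 u2" using v(3) u by (meson pairwiseD)
      moreover have "u1 \<subseteq> c" "u2 \<subseteq> c" using u v(1) by blast+
      moreover have "inj_on \<phi> c" using hc by (metis homeomorphism_def inj_on_inverseI)
      ultimately show "disjnt a b" using u
        by (simp add: disjnt_def inj_on_image_Int[symmetric])
    qed
    show "\<forall>u \<in> (`) \<phi> ` v. \<exists>q. homeomorphism u (\<psi> ` T) (\<psi> \<circ> p \<circ> \<phi>') q"
    proof
      fix a assume "a \<in> (`) \<phi> ` v"
      then obtain u where u: "u \<in> v" "a = \<phi> ` u" by blast
      then obtain q where q: "homeomorphism u T p q" using v(4) by blast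
      have uc: "u \<subseteq> c" using u v(1) by blast
      have s1: "\<phi> ` u \<subseteq> c'" using uc hc by (auto simp: homeomorphism_def)
      have "\<forall>x\<in>u. \<phi>' (\<phi> x) = x" using uc hc by (auto simp: homeomorphism_def)
      then have s2: "\<phi>' ` \<phi> ` u = u" by (simp add: image_image)
      have h1: "homeomorphism (\<phi> ` u) u \<phi>' \<phi>"
        by (rule homeomorphism_of_subsets[OF homeomorphism_symD[OF hc] s1 uc s2])
      have h3: "homeomorphism T (\<psi> ` T) \<psi> \<psi>'"
        by (rule homeomorphism_of_subsets[OF hs TS _ refl]) (use hs in \<open>auto simp: homeomorphism_def\<close>)
      have "homeomorphism (\<phi> ` u) (\<psi> ` T) (\<psi> \<circ> (p \<circ> \<phi>')) ((\<phi> \<circ> q) \<circ> \<psi>')"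
        by (rule homeomorphism_compose[OF homeomorphism_compose[OF h1 q] h3])
      then show "\<exists>q. homeomorphism a (\<psi> ` T) (\<psi> \<circ> p \<circ> \<phi>') q"
        using u by (auto simp: o_assoc)
    qed
  qed
qed

lemma covering_section:
  fixes Z :: "('x::metric_space \<times> 'y::metric_space) set"
  assumes cov: "covering_space Z fst (UNIV::'x set)" and sc: "simply_connected (UNIV::'x set)"
    and lpc: "locally path_connected (UNIV::'x set)" and z: "z \<in> Z"
  shows "\<exists>G. continuous_on UNIV G \<and> (\<forall>x. G x \<in> Z) \<and> (\<forall>x. fst (G x) = x) \<and> G (fst z) = z"
proof -
  obtain eX :: "'x \<Rightarrow> ('x \<Rightarrow>\<^sub>C real)" where eX: "\<forall>x y. dist (eX x) (eX y) = dist x y"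
    using metric_embedding by blast
  obtain eZ :: "('x \<times> 'y) \<Rightarrow> (('x \<times> 'y) \<Rightarrow>\<^sub>C real)" where eZ: "\<forall>x y. dist (eZ x) (eZ y) = dist x y"
    using metric_embedding by blast
  have injX: "inj eX" using eX by (metis dist_eq_0_iff injI)
  have injZ: "inj eZ" using eZ by (metis dist_eq_0_iff injI)
  define iZ where "iZ = inv_into Z eZ"
  have hX: "homeomorphism UNIV (range eX) eX (inv_into UNIV eX)"
    using isometry_homeomorphism[OF eX] .
  have hZ: "homeomorphism Z (eZ ` Z) eZ iZ"
    unfolding iZ_def using isometry_homeomorphism[OF eZ] .
  have cov': "covering_space (eZ ` Z) (eX \<circ> fst \<circ> iZ) (range eX)"
    using covering_space_homeo[OF cov hZ hX] .
  have sc': "simply_connected (range eX)"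
    using homeomorphic_simply_connected[OF _ sc] hX homeomorphic_def by blast
  have lpc': "locally path_connected (range eX)"
    using homeomorphism_locally[OF hX, of path_connected path_connected] lpc
      homeomorphic_path_connectedness homeomorphic_def by blast
  have iZz: "iZ (eZ z) = z" unfolding iZ_def using z injZ by (simp add: inj_on_subset inv_into_f_f)
  obtain g where g: "continuous_on (range eX) g" "g \<in> range eX \<rightarrow> eZ ` Z" "g (eX (fst z)) = eZ z"
      "\<And>y. y \<in> range eX \<Longrightarrow> (eX \<circ> fst \<circ> iZ) (g y) = id y"
  proof (rule covering_space_lift_strong[OF cov', of "eZ z" "eX (fst z)" "range eX" id])
    show "eZ z \<in> eZ ` Z" using z by blast
    show "eX (fst z) \<in> range eX" by blast
    show "continuous_on (range eX) id" by (simp add: continuous_on_id)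
    show "id \<in> range eX \<rightarrow> range eX" by simp
    show "id (eX (fst z)) = (eX \<circ> fst \<circ> iZ) (eZ z)" by (simp add: iZz)
  qed (use sc' lpc' in auto)
  have ciZ: "continuous_on (eZ ` Z) iZ" using hZ homeomorphism_def by blast
  have iZin: "iZ y \<in> Z" if "y \<in> eZ ` Z" for y unfolding iZ_def using that by (simp add: inv_into_into)
  define G where "G = iZ \<circ> g \<circ> eX"
  show ?thesis
  proof (intro exI conjI allI)
    show "continuous_on UNIV G" unfolding G_def
      by (intro continuous_on_compose continuous_on_subset[OF ciZ] continuous_on_subset[OF g(1)])
         (use hX g(2) in \<open>auto simp: homeomorphism_def\<close>)
    show "G x \<in> Z" for x unfolding G_def using g(2) iZin by auto
    show "fst (G x) = x" for x
      using g(4)[of "eX x"] injX unfolding G_def by (auto dest: injD)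
    show "G (fst z) = z" unfolding G_def using g(3) iZz by simp
  qed
qed


locale setting =
  fixes Z :: "('x::metric_space \<times> 'y::metric_space) set" and P :: "(real \<Rightarrow> 'x) set"
  assumes paths: "\<forall>p\<in>P. path p" and Pconn: "P_connected P" and lpcP: "locally_P_contractible P"
    and lh: "local_homeomorphism Z fst UNIV" and cp: "\<forall>p\<in>P. continuation_property Z fst p"
begin

lemma chart:
  assumes "z \<in> Z"
  obtains V h where "z \<in> V" "V \<subseteq> Z" "open (fst ` V)" "\<exists>Op. open Op \<and> V = Z \<inter> Op"
    "\<And>y. y \<in> fst ` V \<Longrightarrow> h y \<in> V" "\<And>y. y \<in> fst ` V \<Longrightarrow> fst (h y) = y"
    "\<And>v. v \<in> V \<Longrightarrow> h (fst v) = v" "continuous_on (fst ` V) h"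
proof -
  obtain V h where V: "z \<in> V" "openin (top_of_set Z) V" "openin (top_of_set UNIV) (fst ` V)"
    "homeomorphism V (fst ` V) fst h"
    using lh assms unfolding local_homeomorphism_def by metis
  show ?thesis
  proof (rule that[of V h])
    show "z \<in> V" by fact
    show "V \<subseteq> Z" using V(2) openin_imp_subset by blast
    show "open (fst ` V)" using V(3) by simp
    show "\<exists>Op. open Op \<and> V = Z \<inter> Op" using V(2) by (auto simp: openin_open)
  qed (use V(4) in \<open>auto simp: homeomorphism_def\<close>)
qed

lemma unique_lift:
  assumes S: "connected S" and c: "continuous_on S q1" "continuous_on S q2"
    and im: "q1 ` S \<subseteq> Z" "q2 ` S \<subseteq> Z" and f: "\<forall>t\<in>S. fst (q1 t) = fst (q2 t)"
    and a: "a \<in> S" "q1 a = q2 a" and t: "t \<in> S"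
  shows "q1 t = q2 t"
proof -
  define E where "E = {t\<in>S. dist (q1 t) (q2 t) = 0}"
  have cl: "closedin (top_of_set S) E"
    unfolding E_def by (intro continuous_closedin_preimage_constant continuous_on_dist c)
  have op: "openin (top_of_set S) E"
  proof (subst openin_subopen, intro ballI)
    fix t0 assume "t0 \<in> E"
    then have t0: "t0 \<in> S" "q1 t0 = q2 t0" by (auto simp: E_def)
    then have "q1 t0 \<in> Z" using im by blast
    then obtain V h where V: "q1 t0 \<in> V" "V \<subseteq> Z" "open (fst ` V)" "\<exists>Op. open Op \<and> V = Z \<inter> Op"
    "\<And>y. y \<in> fst ` V \<Longrightarrow> h y \<in> V" "\<And>y. y \<in> fst ` V \<Longrightarrow> fst (h y) = y"
    "\<And>v. v \<in> V \<Longrightarrow> h (fst v) = v" "continuous_on (fst ` V) h"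
      using chart[OF \<open>q1 t0 \<in> Z\<close>] by blast
    obtain Op where O: "open Op" "V = Z \<inter> Op" using V(4) by blast
    define N where "N = (S \<inter> q1 -` Op) \<inter> (S \<inter> q2 -` Op)"
    have "openin (top_of_set S) N" unfolding N_def
      by (intro openin_Int continuous_openin_preimage_gen c O)
    moreover have "t0 \<in> N" using t0 V O unfolding N_def by auto
    moreover have "N \<subseteq> E"
    proof
      fix u assume u: "u \<in> N"
      then have "q1 u \<in> V" "q2 u \<in> V" "u \<in> S" using O im unfolding N_def by auto
      then have "q1 u = q2 u" using V(7) f \<open>u \<in> S\<close> by metis
      then show "u \<in> E" using \<open>u \<in> S\<close> by (simp add: E_def)
    qed
    ultimately show "\<exists>T. openin (top_of_set S) T \<and> t0 \<in> T \<and> T \<subseteq> E" by blast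
  qed
  have "E = {} \<or> E = S" using S cl op connected_clopen by blast
  moreover have "a \<in> E" using a by (simp add: E_def)
  ultimately show ?thesis using t by (auto simp: E_def)
qed

lemma cont_ball:
  fixes p :: "real \<Rightarrow> 'a::metric_space"
  assumes "continuous_on {0..1} p" "s \<in> {0..1}" "open W" "p s \<in> W"
  obtains d where "d > 0" "\<And>t. t \<in> {0..1} \<Longrightarrow> dist t s < d \<Longrightarrow> p t \<in> W"
proof -
  obtain e where e: "e > 0" "ball (p s) e \<subseteq> W" using assms(3,4) open_contains_ball by blast
  obtain d where "d > 0" "\<And>t. t \<in> {0..1} \<Longrightarrow> dist t s < d \<Longrightarrow> dist (p t) (p s) < e"
    using assms(1,2) e(1) unfolding continuous_on_iff by metis
  then show ?thesis using that e(2) by (auto simp: dist_commute subset_iff)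
qed

lemma lift_exists:
  assumes p: "p \<in> P" and z: "z \<in> Z" "fst z = p 0"
  shows "\<exists>q. continuous_on {0..1} q \<and> q ` {0..1} \<subseteq> Z \<and> (\<forall>t\<in>{0..1}. fst (q t) = p t) \<and> q 0 = z"
proof -
  define Lft where "Lft b q \<longleftrightarrow> continuous_on {0..b} q \<and> q ` {0..b} \<subseteq> Z \<and> (\<forall>t\<in>{0..b}. fst (q t) = p t) \<and> q 0 = z"
    for b :: real and q
  define A where "A = {b\<in>{0..1}. \<exists>q. Lft b q}"
  have pc: "continuous_on {0..1} p" using paths p path_def by auto
  have cpp: "continuation_property Z fst p" using cp p by auto
  have A0: "0 \<in> A" unfolding A_def Lft_def using z by (auto intro!: exI[of _ "\<lambda>_. z"])
  have bdd: "bdd_above A" unfolding A_def by (auto intro: bdd_aboveI[of _ 1])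
  define s where "s = Sup A"
  have As: "b \<le> s" if "b \<in> A" for b unfolding s_def using that bdd by (rule cSup_upper)
  have s0: "0 \<le> s" using As A0 by blast
  have s1: "s \<le> 1" unfolding s_def
  proof (rule cSup_least)
    show "A \<noteq> {}" using A0 by blast
  qed (auto simp: A_def)
  have below: "\<exists>b\<in>A. t < b" if "t < s" for t
    using that A0 bdd unfolding s_def by (metis empty_iff less_cSup_iff)
  have agree: "q1 t = q2 t" if "Lft b q1" "Lft b' q2" "t \<in> {0..min b b'}" for b b' q1 q2 t
  proof (rule unique_lift[of "{0..min b b'}" q1 q2 0])
    show "continuous_on {0..min b b'} q1" using that(1) unfolding Lft_def
      by (auto intro: continuous_on_subset)
    show "continuous_on {0..min b b'} q2" using that(2) unfolding Lft_def
      by (auto intro: continuous_on_subset)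
    show "q1 ` {0..min b b'} \<subseteq> Z" "q2 ` {0..min b b'} \<subseteq> Z" using that unfolding Lft_def by auto
    show "\<forall>t\<in>{0..min b b'}. fst (q1 t) = fst (q2 t)" using that unfolding Lft_def by auto
    show "0 \<in> {0..min b b'}" using that(3) by auto
    show "q1 0 = q2 0" using that unfolding Lft_def by auto
  qed (use that in auto)
  define Q where "Q b = (SOME q. Lft b q)" for b
  have QL: "Lft b (Q b)" if "b \<in> A" for b
    using that unfolding A_def Q_def by (metis (mono_tags, lifting) mem_Collect_eq someI_ex)
  have sA: "s \<in> A"
  proof (cases "s = 0")
    case True then show ?thesis using A0 by simp
  next
    case False
    then have spos: "s > 0" using s0 by simp
    define qs where "qs t = Q (SOME b. b \<in> A \<and> t < b) t" for t
    have qs_eq: "qs t = Q b t" if "b \<in> A" "0 \<le> t" "t < s" "t \<le> b" for b t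
    proof -
      define b' where "b' = (SOME b. b \<in> A \<and> t < b)"
      have ex: "\<exists>b. b \<in> A \<and> t < b" using below[OF that(3)] by blast
      have "b' \<in> A \<and> t < b'" unfolding b'_def by (rule someI_ex[OF ex])
      then have b': "b' \<in> A" "t < b'" by auto
      have "Q b' t = Q b t" by (rule agree[OF QL[OF b'(1)] QL[OF that(1)]]) (use that b' in auto)
      then show ?thesis unfolding qs_def b'_def .
    qed
    have cqs: "continuous_on {0..<s} qs"
    proof (subst continuous_on_eq_continuous_within, intro ballI)
      fix t assume t: "t \<in> {0..<s}"
      then obtain b where b: "b \<in> A" "t < b" using below by auto
      have sub: "(\<lambda>u. min u b) ` {0..<s} \<subseteq> {0..b}" using b(1) unfolding A_def by auto
      have "continuous_on {0..<s} (Q b \<circ> (\<lambda>u. min u b))"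
        by (rule continuous_on_compose) (use QL[OF b(1)] sub in \<open>auto simp: Lft_def intro!: continuous_intros
            intro: continuous_on_subset\<close>)
      then have "continuous (at t within {0..<s}) (Q b \<circ> (\<lambda>u. min u b))"
        using t continuous_on_eq_continuous_within by blast
      then show "continuous (at t within {0..<s}) qs"
      proof (rule continuous_transform_within[where \<delta> = "b - t"])
        show "0 < b - t" "t \<in> {0..<s}" using b t by auto
        fix x' assume "x' \<in> {0..<s}" "dist x' t < b - t"
        then show "(Q b \<circ> (\<lambda>u. min u b)) x' = qs x'"
          using qs_eq[OF b(1), of x'] by (auto simp: dist_real_def)
      qed
    qed
    have qsZ: "qs t \<in> Z" "fst (qs t) = p t" if tt: "t \<in> {0..<s}" for t
    proof -
      obtain b where b: "b \<in> A" "t < b" using below tt by auto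
      then show "qs t \<in> Z" "fst (qs t) = p t" using qs_eq[OF b(1), of t] QL[OF b(1)] tt
        unfolding Lft_def by auto
    qed
    obtain tn zs where tn: "\<forall>n. tn n \<in> {0..<s}" "tn \<longlonglongrightarrow> s" "zs \<in> Z" "(qs \<circ> tn) \<longlonglongrightarrow> zs"
      using cpp spos s1 cqs qsZ unfolding continuation_property_def by (metis greaterThanAtMost_iff image_subset_iff)
    have "(\<lambda>n. fst ((qs \<circ> tn) n)) \<longlonglongrightarrow> fst zs" using tn(4) by (rule tendsto_fst)
    moreover have "(\<lambda>n. fst ((qs \<circ> tn) n)) = p \<circ> tn" using qsZ tn(1) by auto
    moreover have "(p \<circ> tn) \<longlonglongrightarrow> p s"
    proof -
      have "\<forall>n. 0 \<le> tn n \<and> tn n \<le> 1"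
      proof
        fix n show "0 \<le> tn n \<and> tn n \<le> 1" using spec[OF tn(1), of n] s1 by auto
      qed
      then show ?thesis using pc s0 s1 tn(2) unfolding continuous_on_sequentially by auto
    qed
    ultimately have fzs: "fst zs = p s" using LIMSEQ_unique by metis
    obtain V h where V: "zs \<in> V" "V \<subseteq> Z" "open (fst ` V)" "\<exists>Op. open Op \<and> V = Z \<inter> Op"
      "\<And>y. y \<in> fst ` V \<Longrightarrow> h y \<in> V" "\<And>y. y \<in> fst ` V \<Longrightarrow> fst (h y) = y"
      "\<And>v. v \<in> V \<Longrightarrow> h (fst v) = v" "continuous_on (fst ` V) h"
      using chart[OF tn(3)] by blast
    obtain Op where Op: "open Op" "V = Z \<inter> Op" using V(4) by blast
    obtain d where d: "d > 0" "\<And>t. t \<in> {0..1} \<Longrightarrow> dist t s < d \<Longrightarrow> p t \<in> fst ` V"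
    proof -
      have "p s \<in> fst ` V" using fzs V(1) by (metis image_eqI)
      then show ?thesis using cont_ball[OF pc _ V(3), of s] s0 s1 that by auto
    qed
    have ev1: "eventually (\<lambda>n. (qs \<circ> tn) n \<in> Op) sequentially"
      using topological_tendstoD[OF tn(4) Op(1)] Op V(1) by auto
    have ev2: "eventually (\<lambda>n. dist (tn n) s < d) sequentially"
      using tn(2) d(1) by (auto intro: tendstoD)
    obtain n where n: "qs (tn n) \<in> Op" "dist (tn n) s < d"
      using eventually_conj[OF ev1 ev2] eventually_sequentially by auto
    define t0 where "t0 = tn n"
    have t0: "0 \<le> t0" "t0 < s" "s - t0 < d" using tn(1) n(2) unfolding t0_def by (auto simp: dist_real_def)
    have qt0V: "qs t0 \<in> V" using n(1) qsZ[of t0] t0 Op unfolding t0_def by auto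
    obtain b where b: "b \<in> A" "t0 < b" using below t0 by auto
    have bs: "b \<le> s" using As b by auto
    define q' where "q' t = (if t \<le> t0 then Q b t else h (p t))" for t
    have pW: "p t \<in> fst ` V" if "t \<in> {0..s}" "t0 \<le> t" for t
      using d(2)[of t] that t0 s1 by (auto simp: dist_real_def)
    have "Lft s q'"
      unfolding Lft_def
    proof (intro conjI)
      have "continuous_on {0..s} (\<lambda>t. if id t \<le> t0 then Q b t else h (p t))"
      proof (rule continuous_on_cases_le)
        show "continuous_on {t \<in> {0..s}. id t \<le> t0} (Q b)"
          using QL[OF b(1)] b unfolding Lft_def by (auto intro: continuous_on_subset)
        show "continuous_on {t \<in> {0..s}. t0 \<le> id t} (\<lambda>t. h (p t))"
          by (rule continuous_on_compose2[OF V(8)]) (use pc s1 pW in \<open>auto intro: continuous_on_subset\<close>)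
        show "continuous_on {0..s} id" by (simp add: id_def continuous_on_id)
        fix t assume "t \<in> {0..s}" "id t = t0"
        then have "t = t0" by simp
        have "Q b t0 = qs t0" using qs_eq[OF b(1), of t0] t0 b by auto
        moreover have "fst (qs t0) = p t0" using qsZ t0 by auto
        ultimately show "Q b t = h (p t)" using V(7)[OF qt0V] \<open>t = t0\<close> by metis
      qed
      then show "continuous_on {0..s} q'" unfolding q'_def by simp
      show "q' ` {0..s} \<subseteq> Z"
      proof
        fix y assume "y \<in> q' ` {0..s}" then obtain t where t: "t \<in> {0..s}" "y = q' t" by blast
        show "y \<in> Z"
        proof (cases "t \<le> t0")
          case True then show ?thesis using QL[OF b(1)] b t unfolding Lft_def q'_def by auto
        next
          case False then show ?thesis using V(2,5) pW[of t] t unfolding q'_def by auto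
        qed
      qed
      show "\<forall>t\<in>{0..s}. fst (q' t) = p t"
        using QL[OF b(1)] b V(6) pW unfolding Lft_def q'_def by auto
      show "q' 0 = z" using QL[OF b(1)] t0 unfolding Lft_def q'_def by auto
    qed
    then show ?thesis unfolding A_def using s0 s1 by auto
  qed
  have "s = 1"
  proof (rule ccontr)
    assume "s \<noteq> 1"
    then have s1': "s < 1" using s1 by simp
    obtain q where q: "Lft s q" using sA unfolding A_def by auto
    have qs: "q s \<in> Z" "fst (q s) = p s" using q s0 unfolding Lft_def by auto
    obtain V h where V: "q s \<in> V" "V \<subseteq> Z" "open (fst ` V)" "\<exists>Op. open Op \<and> V = Z \<inter> Op"
      "\<And>y. y \<in> fst ` V \<Longrightarrow> h y \<in> V" "\<And>y. y \<in> fst ` V \<Longrightarrow> fst (h y) = y"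
      "\<And>v. v \<in> V \<Longrightarrow> h (fst v) = v" "continuous_on (fst ` V) h"
      using chart[OF qs(1)] by blast
    obtain d where d: "d > 0" "\<And>t. t \<in> {0..1} \<Longrightarrow> dist t s < d \<Longrightarrow> p t \<in> fst ` V"
    proof -
      have "p s \<in> fst ` V" using qs V(1) by (metis image_eqI)
      then show ?thesis using cont_ball[OF pc _ V(3), of s] s0 s1 that by auto
    qed
    define s' where "s' = min 1 (s + d/2)"
    have s': "s < s'" "s' \<le> 1" using s1' d unfolding s'_def by auto
    define q' where "q' t = (if t \<le> s then q t else h (p t))" for t
    have pW: "p t \<in> fst ` V" if "t \<in> {0..s'}" "s \<le> t" for t
      using d(2)[of t] that s0 s' d unfolding s'_def by (auto simp: dist_real_def)
    have "Lft s' q'"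
      unfolding Lft_def
    proof (intro conjI)
      have "continuous_on {0..s'} (\<lambda>t. if id t \<le> s then q t else h (p t))"
      proof (rule continuous_on_cases_le)
        show "continuous_on {t \<in> {0..s'}. id t \<le> s} q"
          using q unfolding Lft_def by (auto intro: continuous_on_subset)
        show "continuous_on {t \<in> {0..s'}. s \<le> id t} (\<lambda>t. h (p t))"
          by (rule continuous_on_compose2[OF V(8)]) (use pc s' pW in \<open>auto intro: continuous_on_subset\<close>)
        show "continuous_on {0..s'} id" by (simp add: id_def continuous_on_id)
        fix t assume "t \<in> {0..s'}" "id t = s"
        then show "q t = h (p t)" using V(7)[OF V(1)] qs by auto
      qed
      then show "continuous_on {0..s'} q'" unfolding q'_def by simp
      show "q' ` {0..s'} \<subseteq> Z"
      proof
        fix y assume "y \<in> q' ` {0..s'}" then obtain t where t: "t \<in> {0..s'}" "y = q' t" by blast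
        show "y \<in> Z"
        proof (cases "t \<le> s")
          case True then show ?thesis using q t unfolding Lft_def q'_def by auto
        next
          case False then show ?thesis using V(2,5) pW[of t] t unfolding q'_def by auto
        qed
      qed
      show "\<forall>t\<in>{0..s'}. fst (q' t) = p t"
        using q V(6) pW unfolding Lft_def q'_def by auto
      show "q' 0 = z" using q s0 unfolding Lft_def q'_def by auto
    qed
    then have "s' \<in> A" unfolding A_def using s' s0 by auto
    then show False using As s' by fastforce
  qed
  then show ?thesis using sA unfolding A_def Lft_def by auto
qed

end

lemma isCont_open_eq:
  fixes f g :: "'a::metric_space \<Rightarrow> 'b::topological_space"
  assumes "open U" "x1 \<in> U" "\<And>x. x \<in> U \<Longrightarrow> f x = g x" "isCont g x1"
  shows "isCont f x1"
proof -
  have "continuous (at x1 within U) g" using assms(4) continuous_at_imp_continuous_within by blast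
  then have "continuous (at x1 within U) f"
    by (rule continuous_transform_within[where \<delta>=1]) (use assms in auto)
  then show ?thesis using continuous_within_open assms(1,2) by blast
qed

context setting begin

definition lft where
  "lft z g = (SOME q. continuous_on {0..1} q \<and> q ` {0..1} \<subseteq> Z \<and> (\<forall>t\<in>{0..1}. fst (q t) = g t) \<and> q 0 = z)"

lemma lft:
  assumes "in_paths P g" "z \<in> Z" "fst z = g 0"
  shows "continuous_on {0..1} (lft z g)" "lft z g ` {0..1} \<subseteq> Z" "\<And>t. t \<in> {0..1} \<Longrightarrow> fst (lft z g t) = g t"
    "lft z g 0 = z"
proof -
  obtain p where p: "p \<in> P" "\<forall>t\<in>{0..1}. p t = g t" using assms(1) unfolding in_paths_def by blast
  have "fst z = p 0" using p assms by auto
  then obtain q where "continuous_on {0..1} q \<and> q ` {0..1} \<subseteq> Z \<and> (\<forall>t\<in>{0..1}. fst (q t) = p t) \<and> q 0 = z"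
    using lift_exists[OF p(1) assms(2)] by blast
  then have ex: "\<exists>q. continuous_on {0..1} q \<and> q ` {0..1} \<subseteq> Z \<and> (\<forall>t\<in>{0..1}. fst (q t) = g t) \<and> q 0 = z"
    using p(2) by auto
  note * = someI_ex[OF ex, folded lft_def]
  show "continuous_on {0..1} (lft z g)" "lft z g ` {0..1} \<subseteq> Z" "\<And>t. t \<in> {0..1} \<Longrightarrow> fst (lft z g t) = g t"
    "lft z g 0 = z" using * by auto
qed

lemma in_paths_rev:
  assumes "in_paths P g" shows "in_paths P (reversepath g)"
proof -
  obtain p where p: "p \<in> P" "\<forall>t\<in>{0..1}. p t = g t" using assms unfolding in_paths_def by blast
  then obtain p' where p': "p' \<in> P" "\<forall>t\<in>{0..1}. p' t = reversepath p t"
    using Pconn unfolding P_connected_def in_paths_def by blast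
  show ?thesis unfolding in_paths_def
    using p p' by (intro bexI[of _ p']) (auto simp: reversepath_def)
qed

lemma unique01:
  fixes q1 q2 :: "real \<Rightarrow> 'x \<times> 'y"
  assumes "continuous_on {0..1} q1" "continuous_on {0..1} q2" "q1 ` {0..1} \<subseteq> Z" "q2 ` {0..1} \<subseteq> Z"
    "\<forall>t\<in>{0..1}. fst (q1 t) = fst (q2 t)" "a \<in> {0..1}" "q1 a = q2 a" "t \<in> {0..1}"
  shows "q1 t = q2 t"
  by (rule unique_lift[OF _ assms(1-5) assms(6-8)]) simp

lemma surj_fst:
  assumes "Z \<noteq> {}" shows "fst ` Z = UNIV"
proof -
  obtain z0 where z0: "z0 \<in> Z" using assms by blast
  have "x \<in> fst ` Z" for x
  proof -
    obtain p where p: "p \<in> P" "pathstart p = fst z0" "pathfinish p = x"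
      using Pconn unfolding P_connected_def by blast
    obtain q where q: "q ` {0..1} \<subseteq> Z" "\<forall>t\<in>{0..1}. fst (q t) = p t"
      using lift_exists[OF p(1) z0] p(2) unfolding pathstart_def by auto
    then have "q 1 \<in> Z" "fst (q 1) = x" using p(3) unfolding pathfinish_def by auto
    then show ?thesis by force
  qed
  then show ?thesis by blast
qed

lemma contr:
  fixes x0 :: 'x
  obtains U H where "open U" "x0 \<in> U" "continuous_on (U \<times> {0..1}) H" "H ` (U \<times> {0..1}) \<subseteq> U"
    "\<forall>t\<in>{0..1}. H (x0, t) = x0" "\<forall>x\<in>U. H (x, 0) = x0 \<and> H (x, 1) = x"
    "\<forall>x\<in>U. in_paths P (\<lambda>t. H (x, t))"
proof -
  have "\<exists>U. open U \<and> x0 \<in> U \<and>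
        (\<exists>H. continuous_on (U \<times> {0..1}) H \<and> H ` (U \<times> {0..1}) \<subseteq> U \<and>
             (\<forall>t\<in>{0..1}. H (x0, t) = x0) \<and>
             (\<forall>x\<in>U. H (x, 0) = x0 \<and> H (x, 1) = x) \<and>
             (\<forall>x\<in>U. in_paths P (\<lambda>t. H (x, t))))"
    using lpcP unfolding locally_P_contractible_def by blast
  then obtain U H where "open U" "x0 \<in> U" "continuous_on (U \<times> {0..1}) H" "H ` (U \<times> {0..1}) \<subseteq> U"
    "\<forall>t\<in>{0..1}. H (x0, t) = x0" "\<forall>x\<in>U. H (x, 0) = x0 \<and> H (x, 1) = x"
    "\<forall>x\<in>U. in_paths P (\<lambda>t. H (x, t))" by (elim exE conjE)
  then show ?thesis by (rule that)
qed

lemma lpc: "locally path_connected (UNIV::'x set)"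
  unfolding locally_path_connected_im_kleinen
proof (intro allI impI)
  fix v and x0 :: 'x
  assume "openin (top_of_set UNIV) v \<and> x0 \<in> v"
  then have v: "open v" "x0 \<in> v" by auto
  obtain U H where U: "open U" "x0 \<in> U" "continuous_on (U \<times> {0..1}) H" "H ` (U \<times> {0..1}) \<subseteq> U"
    "\<forall>t\<in>{0..1}. H (x0, t) = x0" "\<forall>x\<in>U. H (x, 0) = x0 \<and> H (x, 1) = x"
    "\<forall>x\<in>U. in_paths P (\<lambda>t. H (x, t))"
    by (rule contr[of x0])
  have "openin (top_of_set (U \<times> {0..1})) ((U \<times> {0..1}) \<inter> H -` v)"
    by (rule continuous_openin_preimage_gen[OF U(3) v(1)])
  then obtain W where W: "open W" "(U \<times> {0..1}) \<inter> H -` v = (U \<times> {0..1}) \<inter> W"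
    unfolding openin_open by blast
  have "{x0} \<times> {0..1} \<subseteq> W" using W(2) U(2,5) v(2) by auto
  then obtain X0 where X0: "x0 \<in> X0" "open X0" "X0 \<times> {0..1} \<subseteq> W"
    using Elementary_Topology.tube_lemma[OF compact_Icc W(1) \<open>{x0} \<times> {0..1} \<subseteq> W\<close>] by auto
  show "\<exists>u. openin (top_of_set UNIV) u \<and> x0 \<in> u \<and> u \<subseteq> v \<and>
          (\<forall>y. y \<in> u \<longrightarrow> (\<exists>p. path p \<and> path_image p \<subseteq> v \<and> pathstart p = x0 \<and> pathfinish p = y))"
  proof -
    have *: "\<forall>y. y \<in> X0 \<inter> U \<inter> v \<longrightarrow> (\<exists>p. path p \<and> path_image p \<subseteq> v \<and> pathstart p = x0 \<and> pathfinish p = y)"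
    proof (intro allI impI)
      fix y assume y: "y \<in> X0 \<inter> U \<inter> v"
      show "\<exists>p. path p \<and> path_image p \<subseteq> v \<and> pathstart p = x0 \<and> pathfinish p = y"
      proof (intro exI conjI)
        show "path (\<lambda>t. H (y, t))" unfolding path_def
          by (rule continuous_on_compose2[OF U(3)]) (use y in \<open>auto intro!: continuous_intros\<close>)
        show "path_image (\<lambda>t. H (y, t)) \<subseteq> v"
          using W(2) X0(3) y unfolding path_image_def by auto
        show "pathstart (\<lambda>t. H (y, t)) = x0" "pathfinish (\<lambda>t. H (y, t)) = y"
          using U(6) y unfolding pathstart_def pathfinish_def by auto
      qed
    qed
    have "openin (top_of_set UNIV) (X0 \<inter> U \<inter> v)" using X0 U v by auto
    moreover have "x0 \<in> X0 \<inter> U \<inter> v" using X0 U v by auto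
    ultimately show ?thesis using * by blast
  qed
qed

end

context setting begin

lemma local_trivial:
  fixes x0 :: 'x
  shows "\<exists>T. x0 \<in> T \<and> openin (top_of_set UNIV) T \<and>
    (\<exists>v. \<Union>v = Z \<inter> fst -` T \<and> (\<forall>u\<in>v. openin (top_of_set Z) u) \<and> pairwise disjnt v \<and>
         (\<forall>u\<in>v. \<exists>q. homeomorphism u T fst q))"
proof -
  obtain U H where U: "open U" "x0 \<in> U" "continuous_on (U \<times> {0..1}) H" "H ` (U \<times> {0..1}) \<subseteq> U"
    "\<forall>t\<in>{0..1}. H (x0, t) = x0" "\<forall>x\<in>U. H (x, 0) = x0 \<and> H (x, 1) = x"
    "\<forall>x\<in>U. in_paths P (\<lambda>t. H (x, t))"
    by (rule contr[of x0])
  define L where "L z x = lft z (\<lambda>t. H (x, t))" for z x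
  define sec where "sec z x = L z x 1" for z x
  define F where "F = {z\<in>Z. fst z = x0}"
  have Hc: "continuous_on S (\<lambda>t. H (x, t))" if "x \<in> U" "S \<subseteq> {0..1}" for x S
    by (rule continuous_on_compose2[OF U(3)]) (use that in \<open>auto intro!: continuous_intros\<close>)
  have Hx: "continuous_on S (\<lambda>x. H (x, t))" if "t \<in> {0..1}" "S \<subseteq> U" for t S
    by (rule continuous_on_compose2[OF U(3)]) (use that in \<open>auto intro!: continuous_intros\<close>)
  have Lp: "continuous_on {0..1} (L z x)" "L z x ` {0..1} \<subseteq> Z"
     "\<And>t. t \<in> {0..1} \<Longrightarrow> fst (L z x t) = H (x, t)" "L z x 0 = z"
    if z: "z \<in> F" and x: "x \<in> U" for z x
  proof -
    have "fst z = H (x, 0)" using z x U(6) by (auto simp: F_def)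
    then show "continuous_on {0..1} (L z x)" "L z x ` {0..1} \<subseteq> Z"
     "\<And>t. t \<in> {0..1} \<Longrightarrow> fst (L z x t) = H (x, t)" "L z x 0 = z"
      using lft[OF U(7)[rule_format, OF x], of z] z unfolding L_def F_def by auto
  qed
  have Lcont: "isCont (\<lambda>x. L z x t) x1" if z: "z \<in> F" and x1: "x1 \<in> U" and t: "t \<in> {0..1}" for z x1 t
  proof (rule connected_induction_simple[where P = "\<lambda>t. isCont (\<lambda>x. L z x t) x1", of "{0..1}" 0 t])
    show "connected {0..1::real}" by simp
    show "(0::real) \<in> {0..1}" "t \<in> {0..1}" using t by auto
    show "isCont (\<lambda>x. L z x 0) x1"
      by (rule isCont_open_eq[OF U(1) x1, of _ "\<lambda>_. z"]) (use Lp(4)[OF z] in auto)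
    fix t1 :: real assume t1: "t1 \<in> {0..1}"
    have v1: "L z x1 t1 \<in> Z" using Lp(2)[OF z x1] t1 by auto
    obtain V h where V: "L z x1 t1 \<in> V" "V \<subseteq> Z" "open (fst ` V)" "\<exists>Op. open Op \<and> V = Z \<inter> Op"
      "\<And>y. y \<in> fst ` V \<Longrightarrow> h y \<in> V" "\<And>y. y \<in> fst ` V \<Longrightarrow> fst (h y) = y"
      "\<And>v. v \<in> V \<Longrightarrow> h (fst v) = v" "continuous_on (fst ` V) h"
      using chart[OF v1] by blast
    obtain Op where Op: "open Op" "V = Z \<inter> Op" using V(4) by blast
    have HW: "H (x1, t1) \<in> fst ` V" using V(1) Lp(3)[OF z x1 t1] by (metis image_eqI)
    obtain r where r: "r > 0" "ball (H (x1, t1)) r \<subseteq> fst ` V"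
      using V(3) HW open_contains_ball by blast
    obtain d1 where d1: "d1 > 0" "\<And>y. y \<in> U \<times> {0..1} \<Longrightarrow> dist y (x1, t1) < d1 \<Longrightarrow> dist (H y) (H (x1, t1)) < r"
      using U(3) x1 t1 r(1) unfolding continuous_on_iff by (metis mem_Times_iff fst_conv snd_conv)
    define e1 where "e1 = d1 / 2"
    have e1: "e1 > 0" "\<And>x t. x \<in> U \<Longrightarrow> t \<in> {0..1} \<Longrightarrow> dist x x1 < e1 \<Longrightarrow> dist t t1 < e1 \<Longrightarrow> H (x, t) \<in> fst ` V"
    proof -
      show "e1 > 0" using d1 by (simp add: e1_def)
      fix x t assume xt: "x \<in> U" "t \<in> {0..1}" "dist x x1 < e1" "dist t t1 < e1"
      have "dist (x, t) (x1, t1) \<le> dist x x1 + dist t t1"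
        unfolding dist_Pair_Pair using sqrt_sum_squares_le_sum_abs[of "dist x x1" "dist t t1"] by simp
      also have "\<dots> < d1" using xt by (simp add: e1_def)
      finally have "dist (H (x, t)) (H (x1, t1)) < r" using d1(2)[of "(x, t)"] xt by auto
      then show "H (x, t) \<in> fst ` V" using r(2) by (auto simp: dist_commute subset_iff)
    qed
    obtain e2 where e2: "e2 > 0" "\<And>t. t \<in> {0..1} \<Longrightarrow> dist t t1 < e2 \<Longrightarrow> L z x1 t \<in> Op"
      using cont_ball[OF Lp(1)[OF z x1] t1 Op(1)] V(1) Op(2) by blast
    define e where "e = min e1 e2"
    define J where "J = {0..1} \<inter> ball t1 e"
    have Jsub: "J \<subseteq> {0..1}" unfolding J_def by auto
    have Jd: "dist \<tau> t1 < e1" "dist \<tau> t1 < e2" if "\<tau> \<in> J" for \<tau>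
      using that unfolding J_def e_def by (auto simp: dist_commute)
    have convJ: "connected J" unfolding J_def
      by (intro convex_connected convex_Int convex_ball) (simp add: is_interval_convex)
    show "\<exists>T. openin (top_of_set {0..1}) T \<and> t1 \<in> T \<and>
              (\<forall>a\<in>T. \<forall>b\<in>T. isCont (\<lambda>x. L z x a) x1 \<longrightarrow> isCont (\<lambda>x. L z x b) x1)"
    proof (intro exI conjI ballI impI)
      show "openin (top_of_set {0..1}) J" unfolding J_def by (intro openin_open_Int open_ball)
      show "t1 \<in> J" unfolding J_def e_def using t1 e1 e2 by auto
      fix a b assume a: "a \<in> J" and b: "b \<in> J" and Pa: "isCont (\<lambda>x. L z x a) x1"
      have "L z x1 a \<in> Op" using e2(2)[of a] a Jsub Jd by auto
      then have "eventually (\<lambda>x. L z x a \<in> Op) (at x1)"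
        using topological_tendstoD[OF Pa[unfolded isCont_def] Op(1)] by blast
      then obtain e3 where e3: "e3 > 0" "\<And>x. x \<noteq> x1 \<Longrightarrow> dist x x1 < e3 \<Longrightarrow> L z x a \<in> Op"
        unfolding eventually_at by auto
      have e3': "L z x a \<in> Op" if "dist x x1 < e3" for x
        using e3(2)[OF _ that] \<open>L z x1 a \<in> Op\<close> by (cases "x = x1") auto
      define d where "d = min e e3"
      have eq: "L z x \<tau> = h (H (x, \<tau>))" if x: "x \<in> U \<inter> ball x1 d" and \<tau>: "\<tau> \<in> J" for x \<tau>
      proof (rule unique_lift[OF convJ _ _ _ _ _ a _ \<tau>])
        have dx: "dist x x1 < e1" "dist x x1 < e3" using x unfolding d_def e_def by (auto simp: dist_commute)
        have HJ: "H (x, s) \<in> fst ` V" if "s \<in> J" for s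
          using e1(2)[of x s] x that Jsub Jd dx by auto
        show "continuous_on J (L z x)" using Lp(1)[OF z] x Jsub continuous_on_subset by blast
        show "continuous_on J (\<lambda>\<tau>. h (H (x, \<tau>)))"
          by (rule continuous_on_compose2[OF V(8) Hc]) (use x Jsub HJ in auto)
        show "L z x ` J \<subseteq> Z" using Lp(2)[OF z] x Jsub by blast
        show "(\<lambda>\<tau>. h (H (x, \<tau>))) ` J \<subseteq> Z" using V(2,5) HJ by blast
        show "\<forall>t\<in>J. fst (L z x t) = fst (h (H (x, t)))" using Lp(3)[OF z] V(6) HJ x Jsub by auto
        have "L z x a \<in> V" using e3'[of x] dx Lp(2)[OF z, of x] x a Jsub Op(2) by auto
        moreover have "fst (L z x a) = H (x, a)" using Lp(3)[OF z, of x a] x a Jsub by auto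
        ultimately show "L z x a = h (H (x, a))" using V(7) by metis
      qed
      show "isCont (\<lambda>x. L z x b) x1"
      proof (rule isCont_open_eq[of "U \<inter> ball x1 d"])
        show "open (U \<inter> ball x1 d)" using U(1) by auto
        show x1d: "x1 \<in> U \<inter> ball x1 d" using x1 e1 e2 e3 by (auto simp: d_def e_def)
        show "\<And>x. x \<in> U \<inter> ball x1 d \<Longrightarrow> L z x b = h (H (x, b))" using eq b by blast
        have HJ: "H (x, b) \<in> fst ` V" if "x \<in> U \<inter> ball x1 d" for x
          using e1(2)[of x b] that Jsub Jd b by (auto simp: d_def e_def dist_commute)
        have "continuous_on (U \<inter> ball x1 d) (\<lambda>x. h (H (x, b)))"
          by (rule continuous_on_compose2[OF V(8) Hx]) (use b Jsub HJ in auto)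
        then show "isCont (\<lambda>x. h (H (x, b))) x1"
          using x1d \<open>open (U \<inter> ball x1 d)\<close> continuous_on_eq_continuous_at by blast
      qed
    qed
  qed
  have sc: "continuous_on U (sec z)" if z: "z \<in> F" for z
    unfolding sec_def by (rule continuous_at_imp_continuous_on) (use Lcont[OF z] in auto)
  have sZ: "sec z x \<in> Z" "fst (sec z x) = x" if z: "z \<in> F" and x: "x \<in> U" for z x
    using Lp[OF z x] U(6) x unfolding sec_def by auto
  have inj: "z1 = z2" if z: "z1 \<in> F" "z2 \<in> F" and x: "x \<in> U" and eq: "sec z1 x = sec z2 x" for z1 z2 x
  proof -
    have "L z1 x 0 = L z2 x 0"
      by (rule unique01[OF Lp(1)[OF z(1) x] Lp(1)[OF z(2) x] Lp(2)[OF z(1) x] Lp(2)[OF z(2) x], of 1])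
         (use Lp(3)[OF z(1) x] Lp(3)[OF z(2) x] eq in \<open>auto simp: sec_def\<close>)
    then show ?thesis using Lp(4)[OF z(1) x] Lp(4)[OF z(2) x] by simp
  qed
  have cover: "\<exists>z\<in>F. sec z (fst y) = y" if y: "y \<in> Z" "fst y \<in> U" for y
  proof -
    define x where "x = fst y"
    have x: "x \<in> U" using y by (simp add: x_def)
    define g where "g = reversepath (\<lambda>t. H (x, t))"
    have gP: "in_paths P g" unfolding g_def by (rule in_paths_rev) (use U(7) x in auto)
    have g0: "fst y = g 0" using U(6) x by (simp add: g_def reversepath_def x_def)
    define r where "r = lft y g"
    note rl = lft[OF gP y(1) g0, folded r_def]
    have r1: "r 1 \<in> Z" "fst (r 1) = x0" using rl U(6) x by (auto simp: g_def reversepath_def)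
    then have e: "r 1 \<in> F" by (simp add: F_def)
    have rr: "path (reversepath r)" using rl(1) path_reversepath path_def by blast
    have "L (r 1) x 1 = reversepath r 1"
    proof (rule unique01[OF Lp(1)[OF e x] rr[unfolded path_def] Lp(2)[OF e x], of 0])
      show "reversepath r ` {0..1} \<subseteq> Z"
        using rl(2) path_image_reversepath[of r] unfolding path_image_def by simp
      show "\<forall>t\<in>{0..1}. fst (L (r 1) x t) = fst (reversepath r t)"
        using Lp(3)[OF e x] rl(3) by (auto simp: reversepath_def g_def)
      show "L (r 1) x 0 = reversepath r 0" using Lp(4)[OF e x] by (simp add: reversepath_def)
    qed auto
    then have "sec (r 1) x = y" using rl(4) by (simp add: sec_def reversepath_def)
    then show ?thesis using e unfolding x_def by blast
  qed
  define v where "v = (\<lambda>z. sec z ` U) ` F"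
  show ?thesis
  proof (intro exI conjI)
    show "x0 \<in> U" "openin (top_of_set UNIV) U" using U by auto
    show "\<Union>v = Z \<inter> fst -` U"
    proof
      show "\<Union>v \<subseteq> Z \<inter> fst -` U" using sZ unfolding v_def by auto
      show "Z \<inter> fst -` U \<subseteq> \<Union>v"
      proof
        fix y assume "y \<in> Z \<inter> fst -` U"
        then obtain z where "z \<in> F" "sec z (fst y) = y" using cover[of y] by blast
        then show "y \<in> \<Union>v" unfolding v_def using \<open>y \<in> Z \<inter> fst -` U\<close> by (metis IntD2 UnionI image_eqI vimageD)
      qed
    qed
    show "\<forall>u\<in>v. openin (top_of_set Z) u"
    proof
      fix u assume "u \<in> v"
      then obtain z where z: "z \<in> F" "u = sec z ` U" unfolding v_def by blast
      show "openin (top_of_set Z) u"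
      proof (subst openin_subopen, intro ballI)
        fix y assume "y \<in> u"
        then obtain x where x: "x \<in> U" "y = sec z x" using z by blast
        have yZ: "y \<in> Z" using sZ[OF z(1) x(1)] x by simp
        obtain V h where V: "y \<in> V" "V \<subseteq> Z" "open (fst ` V)" "\<exists>Op. open Op \<and> V = Z \<inter> Op"
          "\<And>y. y \<in> fst ` V \<Longrightarrow> h y \<in> V" "\<And>y. y \<in> fst ` V \<Longrightarrow> fst (h y) = y"
          "\<And>v. v \<in> V \<Longrightarrow> h (fst v) = v" "continuous_on (fst ` V) h"
          using chart[OF yZ] by blast
        obtain Op where Op: "open Op" "V = Z \<inter> Op" using V(4) by blast
        define M where "M = U \<inter> sec z -` Op"
        have M: "open M" unfolding M_def by (rule continuous_open_preimage[OF sc[OF z(1)] U(1) Op(1)])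
        define N where "N = Z \<inter> (Op \<inter> fst -` M)"
        show "\<exists>T. openin (top_of_set Z) T \<and> y \<in> T \<and> T \<subseteq> u"
        proof (intro exI conjI)
          show "openin (top_of_set Z) N" unfolding N_def
            by (intro openin_open_Int open_Int Op(1) open_vimage_fst M)
          show "y \<in> N" using V(1) Op(2) x sZ[OF z(1) x(1)] unfolding N_def M_def by auto
          show "N \<subseteq> u"
          proof
            fix y' assume y': "y' \<in> N"
            then have x': "fst y' \<in> U" "sec z (fst y') \<in> Op" "y' \<in> V" using Op(2) unfolding N_def M_def by auto
            have "sec z (fst y') \<in> V" using x' sZ[OF z(1) x'(1)] Op(2) by auto
            then have "sec z (fst y') = y'"
              using V(7) x'(3) sZ[OF z(1) x'(1)] by metis
            then show "y' \<in> u" using z(2) x'(1) by (metis image_eqI)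
          qed
        qed
      qed
    qed
    show "pairwise disjnt v"
    proof (rule pairwiseI)
      fix a b assume ab: "a \<in> v" "b \<in> v" "a \<noteq> b"
      then obtain z1 z2 where z: "z1 \<in> F" "z2 \<in> F" "a = sec z1 ` U" "b = sec z2 ` U" unfolding v_def by blast
      show "disjnt a b" unfolding disjnt_def
      proof (rule ccontr)
        assume "a \<inter> b \<noteq> {}"
        then obtain x1 x2 where x: "x1 \<in> U" "x2 \<in> U" "sec z1 x1 = sec z2 x2" using z by blast
        then have "x1 = x2" using sZ[OF z(1) x(1)] sZ[OF z(2) x(2)] by metis
        then have "z1 = z2" using inj[OF z(1,2) x(1)] x by simp
        then show False using ab z by simp
      qed
    qed
    show "\<forall>u\<in>v. \<exists>q. homeomorphism u U fst q"
    proof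
      fix u assume "u \<in> v"
      then obtain z where z: "z \<in> F" "u = sec z ` U" unfolding v_def by blast
      have "homeomorphism u U fst (sec z)"
        unfolding homeomorphism_def
      proof (intro conjI ballI)
        show "continuous_on u fst" using continuous_on_fst[OF continuous_on_id] by simp
        show "continuous_on U (sec z)" by (rule sc[OF z(1)])
        show "fst ` u = U" using sZ[OF z(1)] z(2) by (force simp: image_image)
        show "sec z ` U = u" using z(2) by simp
        fix y assume "y \<in> u" then show "sec z (fst y) = y" using z sZ[OF z(1)] by auto
      next
        fix x assume "x \<in> U" then show "fst (sec z x) = x" using sZ[OF z(1)] by auto
      qed
      then show "\<exists>q. homeomorphism u U fst q" by blast
    qed
  qed
qed

end

theorem mainTheorem18:
  fixes f :: "'x::metric_space \<times> 'y::metric_space \<Rightarrow> 'w::metric_space"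
    and w :: 'w
    and P :: "(real \<Rightarrow> 'x) set"
  assumes "continuous_on UNIV f"
    and "\<forall>p\<in>P. path p"
    and "simply_connected (UNIV :: 'x set)"
    and "P_connected P"
    and "locally_P_contractible P"
    and "local_homeomorphism {z. f z = w} fst UNIV"
    and "\<forall>p\<in>P. continuation_property {z. f z = w} fst p"
  shows "({z. f z = w} = {} \<or> covering_space {z. f z = w} fst UNIV) \<and>
         (\<forall>C\<in>components {z. f z = w}. \<exists>g. homeomorphism C UNIV fst g)"
proof -
  define Z where "Z = {z. f z = w}"
  interpret setting Z P
    by unfold_locales (use assms in \<open>simp_all add: Z_def\<close>)
  have cov: "covering_space Z fst UNIV" if ne: "Z \<noteq> {}"
  proof (rule covering_spaceI)
    show "continuous_on Z fst" using continuous_on_fst[OF continuous_on_id] by simp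
    show "fst ` Z = UNIV" by (rule surj_fst[OF ne])
    fix x :: 'x assume "x \<in> UNIV"
    show "\<exists>T. x \<in> T \<and> openin (top_of_set UNIV) T \<and>
             (\<exists>v. \<Union>v = Z \<inter> fst -` T \<and> (\<forall>u\<in>v. openin (top_of_set Z) u) \<and>
                  pairwise disjnt v \<and> (\<forall>u\<in>v. \<exists>q. homeomorphism u T fst q))"
      by (rule local_trivial)
  qed
  have pcX: "path_connected (UNIV::'x set)"
    unfolding path_connected_def
  proof (intro ballI)
    fix a b :: 'x
    obtain p where "p \<in> P" "pathstart p = a" "pathfinish p = b"
      using assms(4) unfolding P_connected_def by blast
    then show "\<exists>g. path g \<and> path_image g \<subseteq> UNIV \<and> pathstart g = a \<and> pathfinish g = b"
      using assms(2) by blast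
  qed
  have comp: "\<exists>g. homeomorphism C UNIV fst g" if C: "C \<in> components Z" for C
  proof -
    obtain z where z: "z \<in> Z" "C = connected_component_set Z z" using C by (rule componentsE)
    then have "Z \<noteq> {}" by blast
    obtain G where G: "continuous_on UNIV G" "\<forall>x. G x \<in> Z" "\<forall>x. fst (G x) = x" "G (fst z) = z"
      using covering_section[OF cov[OF \<open>Z \<noteq> {}\<close>] assms(3) lpc z(1)] by blast
    have "connected (range G)"
      using connected_continuous_image[OF G(1) path_connected_imp_connected[OF pcX]] .
    moreover have "z \<in> range G" using G(4) by (metis rangeI)
    moreover have "range G \<subseteq> Z" using G(2) by blast
    ultimately have RC: "range G \<subseteq> C" using z(2) connected_component_maximal by metis
    define E where "E = {y\<in>Z. G (fst y) = y}"
    have cG: "continuous_on Z (\<lambda>y. G (fst y))"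
      by (rule continuous_on_compose2[OF G(1)]) (auto intro: continuous_intros)
    have clE: "closedin (top_of_set Z) E"
    proof -
      have "closedin (top_of_set Z) {y\<in>Z. dist (G (fst y)) y = 0}"
        by (intro continuous_closedin_preimage_constant continuous_on_dist cG continuous_on_id)
      then show ?thesis unfolding E_def by simp
    qed
    have opE: "openin (top_of_set Z) E"
    proof (subst openin_subopen, intro ballI)
      fix y assume "y \<in> E"
      then have yZ: "y \<in> Z" and Gy: "G (fst y) = y" by (auto simp: E_def)
      obtain V h where V: "y \<in> V" "V \<subseteq> Z" "open (fst ` V)" "\<exists>Op. open Op \<and> V = Z \<inter> Op"
        "\<And>y. y \<in> fst ` V \<Longrightarrow> h y \<in> V" "\<And>y. y \<in> fst ` V \<Longrightarrow> fst (h y) = y"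
        "\<And>v. v \<in> V \<Longrightarrow> h (fst v) = v" "continuous_on (fst ` V) h"
        using chart[OF yZ] by blast
      obtain Op where Op: "open Op" "V = Z \<inter> Op" using V(4) by blast
      have oG: "open (UNIV \<inter> G -` Op)" by (rule continuous_open_preimage[OF G(1) open_UNIV Op(1)])
      define N where "N = Z \<inter> (Op \<inter> fst -` (UNIV \<inter> G -` Op))"
      show "\<exists>T. openin (top_of_set Z) T \<and> y \<in> T \<and> T \<subseteq> E"
      proof (intro exI conjI)
        show "openin (top_of_set Z) N" unfolding N_def
          by (intro openin_open_Int open_Int Op(1) open_vimage_fst oG)
        show "y \<in> N" using V(1) Op(2) Gy yZ unfolding N_def by auto
        show "N \<subseteq> E"
        proof
          fix y' assume y': "y' \<in> N"
          then have "G (fst y') \<in> V" "y' \<in> V" using Op(2) G(2) unfolding N_def by auto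
          then have "G (fst y') = y'" using V(7) G(3) by metis
          then show "y' \<in> E" using y' unfolding E_def N_def by auto
        qed
      qed
    qed
    have CZ: "C \<subseteq> Z" using z(2) connected_component_subset by blast
    have "C \<subseteq> E"
    proof -
      obtain O1 where O1: "open O1" "E = Z \<inter> O1" using opE unfolding openin_open by blast
      obtain K where K: "closed K" "E = Z \<inter> K" using clE unfolding closedin_closed by blast
      have "C \<inter> E = C \<inter> O1" using O1(2) CZ by blast
      then have "openin (top_of_set C) (C \<inter> E)"
        using openin_open_Int[OF O1(1), of C] by simp
      moreover have "C \<inter> E = C \<inter> K" using K(2) CZ by blast
      then have "closedin (top_of_set C) (C \<inter> E)"
        using closedin_closed_Int[OF K(1), of C] by simp
      moreover have "connected C" using C in_components_connected by blast
      moreover have "z \<in> C \<inter> E" using z G(4) by (simp add: E_def)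
      ultimately have "C \<inter> E = C" using connected_clopen by blast
      then show ?thesis by blast
    qed
    have CR: "C = range G"
    proof
      show "C \<subseteq> range G"
      proof
        fix y assume "y \<in> C" then have "G (fst y) = y" using \<open>C \<subseteq> E\<close> unfolding E_def by blast
        then show "y \<in> range G" by (metis rangeI)
      qed
    qed (rule RC)
    have "homeomorphism C UNIV fst G"
      unfolding homeomorphism_def
    proof (intro conjI ballI)
      show "continuous_on C fst" using continuous_on_fst[OF continuous_on_id] by simp
      show "continuous_on UNIV G" by (rule G(1))
      show "fst ` C = UNIV" using CR G(3) by (auto simp: image_image)
      show "G ` UNIV = C" using CR by simp
      fix y assume "y \<in> C" then show "G (fst y) = y" using \<open>C \<subseteq> E\<close> by (auto simp: E_def)
    next
      fix x :: 'x show "fst (G x) = x" using G(3) by simp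
    qed
    then show ?thesis by blast
  qed
  show ?thesis
    using cov comp unfolding Z_def by blast
qed

end
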